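(* Let $A\in\mathbb{C}^{m\times n}$ and $b\in\mathbb{C}^m$ have computable entries. Then the pseudoinverse $A^\dagger$, the real number $\|A^\dagger\|_F$, the real number $\min_{x\in\mathbb{C}^n}\|Ax-b\|_2$, the vector $\hat x_{(A,b)}=A^\dagger b$, the real number $\|A^\dagger b\|_2$, and the real number $\|A\|_F\|A^\dagger\|_F$ all consist of computable entries (are computable).
   Context: $A^\dagger\in\mathbb{C}^{n\times m}$ is the Moore–Penrose pseudoinverse of $A$ (the unique matrix with $AA^\dagger A=A$, $A^\dagger AA^\dagger=A^\dagger$, $(AA^\dagger)^H=AA^\dagger$, $(A^\dagger A)^H=A^\dagger A$); $A^\dagger b$ is the minimal-Euclidean-norm minimizer of $\|Ax-b\|_2$. $\|\cdot\|_F$ is the Frobenius norm, $\|\cdot\|_2$ the Euclidean norm. A real number $x$ is computable if there are recursive functions $a,b,s:\mathbb{N}\to\mathbb{N}$ with $b(k)\ne0$ such that $r_k=(-1)^{s(k)}a(k)/b(k)$ satisfies $|r_k-x|\le 2^{-k}$ for all $k$; a complex number is computable if its real and imaginary parts are, and a vector/matrix is computable if all its entries are. *)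

theory Defs
  imports "HOL-Analysis.Analysis"
begin

definition prec :: "(nat list \<Rightarrow> nat) \<Rightarrow> (nat list \<Rightarrow> nat) \<Rightarrow> nat list \<Rightarrow> nat" where
  "prec g h xs = (case xs of [] \<Rightarrow> 0
     | y # ys \<Rightarrow> rec_nat (g ys) (\<lambda>k acc. h (k # acc # ys)) y)"

text \<open>total_rec n f: f is a total recursive function of arity n (its values on
argument lists of length different from n are irrelevant). Minimisation is only
applied to regular functions, which by Kleene's normal form theorem yields exactly
the total recursive functions.\<close>
inductive total_rec :: "nat \<Rightarrow> (nat list \<Rightarrow> nat) \<Rightarrow> bool" where
  zero: "total_rec n (\<lambda>_. 0)"
| succ: "total_rec 1 (\<lambda>xs. Suc (hd xs))"
| proj: "i < n \<Longrightarrow> total_rec n (\<lambda>xs. xs ! i)"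
| comp: "total_rec m f \<Longrightarrow> length gs = m \<Longrightarrow> (\<forall>g\<in>set gs. total_rec n g) \<Longrightarrow>
         total_rec n (\<lambda>xs. f (map (\<lambda>g. g xs) gs))"
| prim_rec: "total_rec n g \<Longrightarrow> total_rec (Suc (Suc n)) h \<Longrightarrow> total_rec (Suc n) (prec g h)"
| mu: "total_rec (Suc n) g \<Longrightarrow> (\<forall>xs. length xs = n \<longrightarrow> (\<exists>y. g (y # xs) = 0)) \<Longrightarrow>
       total_rec n (\<lambda>xs. LEAST y. g (y # xs) = 0)"

definition recursive_fn :: "(nat \<Rightarrow> nat) \<Rightarrow> bool" where
  "recursive_fn f \<longleftrightarrow> (\<exists>g. total_rec 1 g \<and> (\<forall>k. f k = g [k]))"

definition computable_real :: "real \<Rightarrow> bool" where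
  "computable_real x \<longleftrightarrow> (\<exists>a b s. recursive_fn a \<and> recursive_fn b \<and> recursive_fn s \<and>
     (\<forall>k. b k \<noteq> 0 \<and>
        \<bar>(-1) ^ (s k) * real (a k) / real (b k) - x\<bar> \<le> 1 / 2 ^ k))"

definition computable_complex :: "complex \<Rightarrow> bool" where
  "computable_complex z \<longleftrightarrow> computable_real (Re z) \<and> computable_real (Im z)"

definition computable_vec :: "complex ^ 'n \<Rightarrow> bool" where
  "computable_vec v \<longleftrightarrow> (\<forall>i. computable_complex (v $ i))"

definition computable_mat :: "complex ^ 'n ^ 'm \<Rightarrow> bool" where
  "computable_mat A \<longleftrightarrow> (\<forall>i j. computable_complex (A $ i $ j))"

definition conj_transpose :: "complex ^ 'n ^ 'm \<Rightarrow> complex ^ 'm ^ 'n" where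
  "conj_transpose A = (\<chi> i j. cnj (A $ j $ i))"

definition pinv :: "complex ^ 'n ^ 'm \<Rightarrow> complex ^ 'm ^ 'n" where
  "pinv A = (THE X. A ** X ** A = A \<and> X ** A ** X = X \<and>
                    conj_transpose (A ** X) = A ** X \<and> conj_transpose (X ** A) = X ** A)"

definition frob_norm :: "complex ^ 'n ^ 'm \<Rightarrow> real" where
  "frob_norm A = sqrt (\<Sum>i\<in>UNIV. \<Sum>j\<in>UNIV. (cmod (A $ i $ j))\<^sup>2)"

definition vec_norm2 :: "complex ^ 'n \<Rightarrow> real" where
  "vec_norm2 v = sqrt (\<Sum>i\<in>UNIV. (cmod (v $ i))\<^sup>2)"

end

theory Submission
  imports Defs "HOL-Analysis.Analysis"
begin


definition RF :: "nat \<Rightarrow> (nat list \<Rightarrow> nat) \<Rightarrow> bool" where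
  "RF n f \<longleftrightarrow> (\<exists>g. total_rec n g \<and> (\<forall>xs. length xs = n \<longrightarrow> f xs = g xs))"

lemma RF_tr: "total_rec n f \<Longrightarrow> RF n f"
  unfolding RF_def by blast

lemma RF_cong: "RF n f \<Longrightarrow> (\<And>xs. length xs = n \<Longrightarrow> f xs = g xs) \<Longrightarrow> RF n g"
  unfolding RF_def by metis

lemma RF_zero: "RF n (\<lambda>_. 0)" by (rule RF_tr, rule total_rec.zero)
lemma RF_succ: "RF 1 (\<lambda>xs. Suc (hd xs))" by (rule RF_tr, rule total_rec.succ)
lemma RF_proj: "i < n \<Longrightarrow> RF n (\<lambda>xs. xs ! i)" by (rule RF_tr, rule total_rec.proj)

lemma RF_comp1:
  assumes "RF 1 f" "RF n g"
  shows "RF n (\<lambda>xs. f [g xs])"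
proof -
  obtain f' where f': "total_rec 1 f'" "\<And>xs. length xs = 1 \<Longrightarrow> f xs = f' xs"
    using assms(1) unfolding RF_def by blast
  obtain g' where g': "total_rec n g'" "\<And>xs. length xs = n \<Longrightarrow> g xs = g' xs"
    using assms(2) unfolding RF_def by blast
  have "total_rec n (\<lambda>xs. f' (map (\<lambda>g. g xs) [g']))"
    by (rule total_rec.comp[OF f'(1)]) (auto simp: g'(1))
  then show ?thesis
    by (rule RF_tr[THEN RF_cong]) (simp add: f'(2) g'(2))
qed

lemma RF_comp2:
  assumes "RF 2 f" "RF n g" "RF n h"
  shows "RF n (\<lambda>xs. f [g xs, h xs])"
proof -
  obtain f' where f': "total_rec 2 f'" "\<And>xs. length xs = 2 \<Longrightarrow> f xs = f' xs"
    using assms(1) unfolding RF_def by blast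
  obtain g' where g': "total_rec n g'" "\<And>xs. length xs = n \<Longrightarrow> g xs = g' xs"
    using assms(2) unfolding RF_def by blast
  obtain h' where h': "total_rec n h'" "\<And>xs. length xs = n \<Longrightarrow> h xs = h' xs"
    using assms(3) unfolding RF_def by blast
  have "total_rec n (\<lambda>xs. f' (map (\<lambda>g. g xs) [g', h']))"
    by (rule total_rec.comp[OF f'(1)]) (auto simp: g'(1) h'(1))
  then show ?thesis
    by (rule RF_tr[THEN RF_cong]) (simp add: f'(2) g'(2) h'(2))
qed

lemma RF_prec:
  assumes "RF n g" "RF (Suc (Suc n)) h"
  shows "RF (Suc n) (prec g h)"
proof -
  obtain g' where g': "total_rec n g'" "\<And>xs. length xs = n \<Longrightarrow> g xs = g' xs"
    using assms(1) unfolding RF_def by blast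
  obtain h' where h': "total_rec (Suc (Suc n)) h'" "\<And>xs. length xs = Suc (Suc n) \<Longrightarrow> h xs = h' xs"
    using assms(2) unfolding RF_def by blast
  have "total_rec (Suc n) (prec g' h')"
    by (rule total_rec.prim_rec[OF g'(1) h'(1)])
  then show ?thesis
  proof (rule RF_tr[THEN RF_cong])
    fix xs :: "nat list" assume "length xs = Suc n"
    then obtain y ys where xs: "xs = y # ys" "length ys = n" by (cases xs) auto
    have e: "(\<lambda>k acc. h (k # acc # ys)) = (\<lambda>k acc. h' (k # acc # ys))"
      using h'(2) xs(2) by auto
    show "prec g' h' xs = prec g h xs"
      unfolding xs prec_def using e g'(2)[OF xs(2)] by simp
  qed
qed

lemma RF_mu:
  assumes "RF (Suc n) g" "\<And>xs. length xs = n \<Longrightarrow> \<exists>y. g (y # xs) = 0"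
  shows "RF n (\<lambda>xs. LEAST y. g (y # xs) = 0)"
proof -
  obtain g' where g': "total_rec (Suc n) g'" "\<And>xs. length xs = Suc n \<Longrightarrow> g xs = g' xs"
    using assms(1) unfolding RF_def by blast
  have "total_rec n (\<lambda>xs. LEAST y. g' (y # xs) = 0)"
    by (rule total_rec.mu[OF g'(1)]) (use assms(2) g'(2) in fastforce)
  then show ?thesis
    by (rule RF_tr[THEN RF_cong]) (simp add: g'(2))
qed

lemma RF_prec0: "RF 0 g \<Longrightarrow> RF 2 h \<Longrightarrow> RF 1 (prec g h)"
  using RF_prec[of 0 g h] by (simp add: numeral_2_eq_2)
lemma RF_prec1: "RF 1 g \<Longrightarrow> RF 3 h \<Longrightarrow> RF 2 (prec g h)"
  using RF_prec[of 1 g h] by (simp add: numeral_2_eq_2 numeral_3_eq_3)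

lemma RF_const: "RF n (\<lambda>_. c)"
proof (induction c)
  case 0 then show ?case by (rule RF_zero)
next
  case (Suc c)
  from RF_comp1[OF RF_succ Suc] show ?case by simp
qed

definition rf :: "(nat \<Rightarrow> nat) \<Rightarrow> bool" where
  "rf f \<longleftrightarrow> RF 1 (\<lambda>xs. f (hd xs))"

lemma rf_recursive_fn: "recursive_fn f \<longleftrightarrow> rf f"
proof
  assume "recursive_fn f"
  then obtain g where g: "total_rec 1 g" "\<forall>k. f k = g [k]" unfolding recursive_fn_def by blast
  show "rf f" unfolding rf_def
  proof (rule RF_tr[OF g(1), THEN RF_cong])
    fix xs :: "nat list" assume "length xs = 1"
    then obtain k where "xs = [k]" by (cases xs) auto
    then show "g xs = f (hd xs)" using g(2) by simp
  qed
next
  assume "rf f"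
  then obtain g where g: "total_rec 1 g" "\<forall>xs. length xs = 1 \<longrightarrow> f (hd xs) = g xs"
    unfolding rf_def RF_def by blast
  have "\<forall>k. f k = g [k]" using g(2) by (metis One_nat_def length_Cons list.sel(1) list.size(3))
  then show "recursive_fn f" unfolding recursive_fn_def
    using g(1) by blast
qed

lemma RF_compose: "rf \<phi> \<Longrightarrow> RF n f \<Longrightarrow> RF n (\<lambda>xs. \<phi> (f xs))"
  unfolding rf_def by (drule (1) RF_comp1) simp

lemma RF_op2: "RF 2 (\<lambda>xs. op (xs!0) (xs!1)) \<Longrightarrow> RF n f \<Longrightarrow> RF n g \<Longrightarrow> RF n (\<lambda>xs. op (f xs) (g xs))"
  by (drule (2) RF_comp2) simp

lemma RF_add2: "RF 2 (\<lambda>xs. xs!0 + xs!1)"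
proof -
  have h: "RF 3 (\<lambda>zs. Suc (zs!1))" using RF_comp1[OF RF_succ RF_proj[of 1 3]] by simp
  have r: "RF 2 (prec (\<lambda>ys. ys!0) (\<lambda>zs. Suc (zs!1)))"
    by (rule RF_prec1[OF RF_proj h]) simp
  have e: "rec_nat x (\<lambda>k acc. Suc acc) y = y + x" for x y :: nat by (induction y) auto
  show ?thesis
    by (rule RF_cong[OF r]) (auto simp: e prec_def numeral_eq_Suc length_Suc_conv)
qed

lemma RF_add: "RF n f \<Longrightarrow> RF n g \<Longrightarrow> RF n (\<lambda>xs. f xs + g xs)"
  by (rule RF_op2[OF RF_add2])

lemma RF_mul2: "RF 2 (\<lambda>xs. xs!0 * xs!1)"
proof -
  have h: "RF 3 (\<lambda>zs. zs!1 + zs!2)" by (rule RF_add; rule RF_proj; simp)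
  have r: "RF 2 (prec (\<lambda>ys. 0) (\<lambda>zs. zs!1 + zs!2))"
    by (rule RF_prec1[OF RF_zero h])
  have e: "rec_nat 0 (\<lambda>k acc. acc + x) y = y * x" for x y :: nat by (induction y) auto
  show ?thesis
    by (rule RF_cong[OF r]) (auto simp: e prec_def numeral_eq_Suc length_Suc_conv)
qed

lemma RF_mul: "RF n f \<Longrightarrow> RF n g \<Longrightarrow> RF n (\<lambda>xs. f xs * g xs)"
  by (rule RF_op2[OF RF_mul2])

lemma RF_pred: "RF 1 (\<lambda>xs. hd xs - 1)"
proof -
  have r: "RF 1 (prec (\<lambda>ys. 0) (\<lambda>zs. zs!0))"
    by (rule RF_prec0[OF RF_zero RF_proj]) simp
  have e: "rec_nat 0 (\<lambda>k acc. k) y = y - 1" for y :: nat by (induction y) auto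
  show ?thesis
    by (rule RF_cong[OF r]) (auto simp: e prec_def length_Suc_conv)
qed

lemma RF_sub2: "RF 2 (\<lambda>xs. xs!0 - xs!1)"
proof -
  have h: "RF 3 (\<lambda>zs. zs!1 - 1)" using RF_comp1[OF RF_pred RF_proj[of 1 3]] by simp
  have r: "RF 2 (prec (\<lambda>ys. ys!0) (\<lambda>zs. zs!1 - 1))"
    by (rule RF_prec1[OF RF_proj h]) simp
  have e: "rec_nat x (\<lambda>k acc. acc - Suc 0) y = x - y" for x y :: nat by (induction y) auto
  have "RF 2 (\<lambda>xs. xs!1 - xs!0)"
    by (rule RF_cong[OF r]) (auto simp: e prec_def numeral_eq_Suc length_Suc_conv)
  from RF_comp2[OF this RF_proj[of 1 2] RF_proj[of 0 2]] show ?thesis by simp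
qed

lemma RF_sub: "RF n f \<Longrightarrow> RF n g \<Longrightarrow> RF n (\<lambda>xs. f xs - g xs)"
  by (rule RF_op2[OF RF_sub2])

lemma rf_pow2: "rf (\<lambda>k. 2 ^ k)"
proof -
  have h: "RF 2 (\<lambda>zs. zs!1 + zs!1)" by (rule RF_add; rule RF_proj; simp)
  have r: "RF 1 (prec (\<lambda>ys. 1) (\<lambda>zs. zs!1 + zs!1))"
    by (rule RF_prec0[OF RF_const h])
  have e: "rec_nat (Suc 0) (\<lambda>k acc. acc + acc) y = (2::nat) ^ y" for y :: nat by (induction y) auto
  show ?thesis unfolding rf_def
    by (rule RF_cong[OF r]) (auto simp: e prec_def length_Suc_conv)
qed

lemma rf_mod2: "rf (\<lambda>k. k mod 2)"
proof -
  have h: "RF 2 (\<lambda>zs. 1 - zs!1)" by (rule RF_sub[OF RF_const RF_proj]) simp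
  have r: "RF 1 (prec (\<lambda>ys. 0) (\<lambda>zs. 1 - zs!1))"
    by (rule RF_prec0[OF RF_zero h])
  have e: "rec_nat 0 (\<lambda>k. (-) (Suc 0)) y = y mod 2" for y :: nat by (induction y) (auto simp: mod_Suc)
  show ?thesis unfolding rf_def
    by (rule RF_cong[OF r]) (auto simp: e prec_def length_Suc_conv)
qed

lemma rf_const: "rf (\<lambda>_. c)" unfolding rf_def by (rule RF_const)
lemma rf_id: "rf (\<lambda>k. k)" unfolding rf_def
  by (rule RF_cong[OF RF_proj[of 0 1]]) (auto simp: length_Suc_conv)

lemma rf_add: "rf f \<Longrightarrow> rf g \<Longrightarrow> rf (\<lambda>k. f k + g k)" unfolding rf_def by (rule RF_add)
lemma rf_mul: "rf f \<Longrightarrow> rf g \<Longrightarrow> rf (\<lambda>k. f k * g k)" unfolding rf_def by (rule RF_mul)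
lemma rf_sub: "rf f \<Longrightarrow> rf g \<Longrightarrow> rf (\<lambda>k. f k - g k)" unfolding rf_def by (rule RF_sub)
lemma rf_comp: assumes "rf f" "rf g" shows "rf (\<lambda>k. f (g k))"
  using RF_compose[OF assms(1) assms(2)[unfolded rf_def]] unfolding rf_def .

lemma rf_mu:
  assumes "rf D" "rf W" "\<And>k. D k > 0"
  shows "rf (\<lambda>k. LEAST n. W k < D k * ((n + 1) * (n + 1)))"
proof -
  let ?g = "\<lambda>xs::nat list. 1 - (D (xs!1) * ((xs!0 + 1) * (xs!0 + 1)) - W (xs!1))"
  have D2: "RF 2 (\<lambda>xs. D (xs!1))" using RF_compose[OF assms(1) RF_proj[of 1 2]] by simp
  have W2: "RF 2 (\<lambda>xs. W (xs!1))" using RF_compose[OF assms(2) RF_proj[of 1 2]] by simp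
  have S: "RF 2 (\<lambda>xs. xs!0 + 1)" by (rule RF_add[OF RF_proj RF_const]) simp
  have "RF 2 ?g"
    by (intro RF_sub RF_const RF_mul D2 W2 S)
  then have "RF (Suc 1) ?g" by (simp only: Suc_1)
  then have r: "RF 1 (\<lambda>xs. LEAST y. ?g (y # xs) = 0)"
  proof (rule RF_mu)
    fix xs :: "nat list" assume "length xs = 1"
    then obtain k where xs: "xs = [k]" by (cases xs) auto
    have "W k < D k * ((W k + 1) * (W k + 1))"
    proof -
      have "W k < (W k + 1) * (W k + 1)" by simp
      also have "\<dots> \<le> D k * ((W k + 1) * (W k + 1))" using assms(3)[of k] by (metis Suc_leI mult_le_mono1 mult_1 One_nat_def)
      finally show ?thesis .
    qed
    then show "\<exists>y. ?g (y # xs) = 0" by (intro exI[of _ "W k"]) (simp add: xs)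
  qed
  have e: "?g (y # [k]) = 0 \<longleftrightarrow> W k < D k * ((y + 1) * (y + 1))" for y k by auto
  show ?thesis unfolding rf_def
  proof (rule RF_cong[OF r])
    fix xs :: "nat list" assume "length xs = 1"
    then obtain k where xs: "xs = [k]" by (cases xs) auto
    show "(LEAST y. ?g (y # xs) = 0) = (LEAST n. W (hd xs) < D (hd xs) * ((n + 1) * (n + 1)))"
      unfolding xs e list.sel(1) ..
  qed
qed



definition val :: "(nat \<Rightarrow> nat) \<Rightarrow> (nat \<Rightarrow> nat) \<Rightarrow> (nat \<Rightarrow> nat) \<Rightarrow> nat \<Rightarrow> real" where
  "val p q d k = (real (p k) - real (q k)) / real (d k)"

definition capx :: "real \<Rightarrow> bool" where
  "capx x \<longleftrightarrow> (\<exists>p q d. rf p \<and> rf q \<and> rf d \<and> (\<forall>k. 0 < d k) \<and> (\<forall>k. \<bar>val p q d k - x\<bar> \<le> 1 / 2 ^ k))"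

lemma computable_real_capx: "computable_real x \<longleftrightarrow> capx x"
proof
  assume "computable_real x"
  then obtain a b s where abs: "recursive_fn a" "recursive_fn b" "recursive_fn s"
    "\<And>k. b k \<noteq> 0 \<and> \<bar>(-1) ^ (s k) * real (a k) / real (b k) - x\<bar> \<le> 1 / 2 ^ k"
    unfolding computable_real_def by blast
  let ?p = "\<lambda>k. a k * (1 - s k mod 2)" and ?q = "\<lambda>k. a k * (s k mod 2)"
  have "rf ?p" "rf ?q" using abs(1,3) unfolding rf_recursive_fn
    by (intro rf_mul rf_sub rf_const rf_comp[OF rf_mod2]; simp)+
  moreover have "val ?p ?q b k = (-1) ^ (s k) * real (a k) / real (b k)" for k
    unfolding val_def by (cases "even (s k)") (auto simp: odd_iff_mod_2_eq_one)
  ultimately show "capx x" unfolding capx_def using abs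
    by (intro exI[of _ ?p] exI[of _ ?q] exI[of _ b]) (auto simp: rf_recursive_fn)
next
  assume "capx x"
  then obtain p q d where pqd: "rf p" "rf q" "rf d" "\<And>k. 0 < d k" "\<And>k. \<bar>val p q d k - x\<bar> \<le> 1 / 2 ^ k"
    unfolding capx_def by blast
  let ?a = "\<lambda>k. (p k - q k) + (q k - p k)" and ?s = "\<lambda>k. 1 - (1 - (q k - p k))"
  have "rf ?a" "rf ?s" using pqd by (intro rf_add rf_sub rf_const; simp)+
  moreover have "(-1) ^ (?s k) * real (?a k) / real (d k) = val p q d k" for k
    unfolding val_def by (cases "p k < q k"; cases "q k < p k") (auto simp: of_nat_diff)
  ultimately show "computable_real x" unfolding computable_real_def rf_recursive_fn[symmetric]
    using pqd by (intro exI[of _ ?a] exI[of _ d] exI[of _ ?s]) (auto simp: rf_recursive_fn)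
qed

lemma rf_shift: "rf f \<Longrightarrow> rf (\<lambda>k. f (k + c))"
  by (rule rf_comp) (auto intro: rf_add rf_id rf_const)

lemma capx_nat: "capx (real n)"
  unfolding capx_def val_def
  by (intro exI[of _ "\<lambda>_. n"] exI[of _ "\<lambda>_. 0"] exI[of _ "\<lambda>_. 1"]) (auto simp: rf_const)

lemma capx_uminus: "capx x \<Longrightarrow> capx (- x)"
  unfolding capx_def
proof (elim exE conjE)
  fix p q d assume h: "rf p" "rf q" "rf d" "\<forall>k. 0 < d k" "\<forall>k. \<bar>val p q d k - x\<bar> \<le> 1 / 2 ^ k"
  have "val q p d k = - val p q d k" for k unfolding val_def by (metis minus_diff_eq minus_divide_left)
  then show "\<exists>p q d. rf p \<and> rf q \<and> rf d \<and> (\<forall>k. 0 < d k) \<and> (\<forall>k. \<bar>val p q d k - - x\<bar> \<le> 1 / 2 ^ k)"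
    using h by (intro exI[of _ q] exI[of _ p] exI[of _ d]) (auto simp: abs_minus_commute)
qed

lemma capx_add: assumes "capx x" "capx y" shows "capx (x + y)"
proof -
  obtain p1 q1 d1 where h1: "rf p1" "rf q1" "rf d1" "\<And>k. 0 < d1 k" "\<And>k. \<bar>val p1 q1 d1 k - x\<bar> \<le> 1 / 2 ^ k"
    using assms(1) unfolding capx_def by blast
  obtain p2 q2 d2 where h2: "rf p2" "rf q2" "rf d2" "\<And>k. 0 < d2 k" "\<And>k. \<bar>val p2 q2 d2 k - y\<bar> \<le> 1 / 2 ^ k"
    using assms(2) unfolding capx_def by blast
  let ?p = "\<lambda>k. p1 (k+1) * d2 (k+1) + p2 (k+1) * d1 (k+1)"
  let ?q = "\<lambda>k. q1 (k+1) * d2 (k+1) + q2 (k+1) * d1 (k+1)"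
  let ?d = "\<lambda>k. d1 (k+1) * d2 (k+1)"
  have rfs: "rf ?p" "rf ?q" "rf ?d" using h1 h2 by (intro rf_add rf_mul rf_shift; simp)+
  have v: "val ?p ?q ?d k = val p1 q1 d1 (k+1) + val p2 q2 d2 (k+1)" for k
    using h1(4)[of "k+1"] h2(4)[of "k+1"] unfolding val_def by (simp add: field_simps)
  have "\<bar>val ?p ?q ?d k - (x + y)\<bar> \<le> 1 / 2 ^ k" for k
  proof -
    have "\<bar>val ?p ?q ?d k - (x + y)\<bar> \<le> \<bar>val p1 q1 d1 (k+1) - x\<bar> + \<bar>val p2 q2 d2 (k+1) - y\<bar>"
      unfolding v by linarith
    also have "\<dots> \<le> 1 / 2 ^ (k+1) + 1 / 2 ^ (k+1)" using h1(5) h2(5) by (intro add_mono)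
    also have "\<dots> = 1 / 2 ^ k" by simp
    finally show ?thesis .
  qed
  then show ?thesis unfolding capx_def using rfs h1(4) h2(4)
    by (intro exI[of _ ?p] exI[of _ ?q] exI[of _ ?d]) auto
qed

lemma capx_mul: assumes "capx x" "capx y" shows "capx (x * y)"
proof -
  obtain p1 q1 d1 where h1: "rf p1" "rf q1" "rf d1" "\<And>k. 0 < d1 k" "\<And>k. \<bar>val p1 q1 d1 k - x\<bar> \<le> 1 / 2 ^ k"
    using assms(1) unfolding capx_def by blast
  obtain p2 q2 d2 where h2: "rf p2" "rf q2" "rf d2" "\<And>k. 0 < d2 k" "\<And>k. \<bar>val p2 q2 d2 k - y\<bar> \<le> 1 / 2 ^ k"
    using assms(2) unfolding capx_def by blast
  obtain c where c: "max \<bar>x\<bar> \<bar>y\<bar> < 2 ^ c" using real_arch_pow[of 2 "max \<bar>x\<bar> \<bar>y\<bar>"] by auto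
  let ?p = "\<lambda>k. p1 (k+(c+2)) * p2 (k+(c+2)) + q1 (k+(c+2)) * q2 (k+(c+2))"
  let ?q = "\<lambda>k. p1 (k+(c+2)) * q2 (k+(c+2)) + q1 (k+(c+2)) * p2 (k+(c+2))"
  let ?d = "\<lambda>k. d1 (k+(c+2)) * d2 (k+(c+2))"
  have rfs: "rf ?p" "rf ?q" "rf ?d" using h1 h2 by (intro rf_add rf_mul rf_shift; simp)+
  have v: "val ?p ?q ?d k = val p1 q1 d1 (k+(c+2)) * val p2 q2 d2 (k+(c+2))" for k
    using h1(4)[of "k+(c+2)"] h2(4)[of "k+(c+2)"] unfolding val_def by (simp add: field_simps)
  have "\<bar>val ?p ?q ?d k - (x * y)\<bar> \<le> 1 / 2 ^ k" for k
  proof -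
    define r1 where "r1 = val p1 q1 d1 (k+(c+2))"
    define r2 where "r2 = val p2 q2 d2 (k+(c+2))"
    define e :: real where "e = 1 / 2 ^ (k+(c+2))"
    have e1: "\<bar>r1 - x\<bar> \<le> e" "\<bar>r2 - y\<bar> \<le> e" using h1(5)[of "k+(c+2)"] h2(5)[of "k+(c+2)"] unfolding r1_def r2_def e_def by auto
    have "(1::real) \<le> 2^(k+(c+2))" by (rule one_le_power) simp
    then have e0: "0 \<le> e" "e \<le> 1" unfolding e_def by auto
    have cx: "\<bar>x\<bar> \<le> 2^c" "\<bar>y\<bar> \<le> 2^c" using c by auto
    have c1: "(1::real) \<le> 2^c" by simp
    have "\<bar>r1\<bar> \<le> 2^c + 1" using e1 e0 cx by linarith
    have "\<bar>r1 * r2 - x * y\<bar> = \<bar>r1 * (r2 - y) + (r1 - x) * y\<bar>" by (simp add: algebra_simps)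
    also have "\<dots> \<le> \<bar>r1\<bar> * \<bar>r2 - y\<bar> + \<bar>r1 - x\<bar> * \<bar>y\<bar>" by (metis abs_mult abs_triangle_ineq)
    also have "\<dots> \<le> (2^c + 1) * e + e * 2^c"
      by (intro add_mono mult_mono) (use e1 e0 cx \<open>\<bar>r1\<bar> \<le> 2^c + 1\<close> in auto)
    also have "\<dots> \<le> 2^(c+2) * e" using mult_left_mono[OF c1 e0(1)] e0 by (simp add: algebra_simps)
    also have "\<dots> = 1 / 2 ^ k" unfolding e_def by (simp add: power_add field_simps)
    finally show ?thesis unfolding v r1_def r2_def .
  qed
  then show ?thesis unfolding capx_def using rfs h1(4) h2(4)
    by (intro exI[of _ ?p] exI[of _ ?q] exI[of _ ?d]) auto
qed


lemma capx_inverse_nz: assumes "capx x" "x \<noteq> 0" shows "capx (inverse x)"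
proof -
  obtain p q d where h: "rf p" "rf q" "rf d" "\<And>k. 0 < d k" "\<And>k. \<bar>val p q d k - x\<bar> \<le> 1 / 2 ^ k"
    using assms(1) unfolding capx_def by blast
  obtain c where c: "1 / \<bar>x\<bar> < 2 ^ c" using real_arch_pow[of 2 "1 / \<bar>x\<bar>"] by auto
  define m :: real where "m = 1 / 2 ^ c"
  have m0: "0 < m" unfolding m_def by simp
  have xm: "m \<le> \<bar>x\<bar>" using c assms(2) unfolding m_def by (simp add: field_simps)
  let ?j = "\<lambda>k. k + (2 * c + 1)"
  have rj: "\<bar>val p q d (?j k)\<bar> \<ge> m / 2" and rjx: "\<bar>val p q d (?j k) - x\<bar> \<le> (1 / 2 ^ k) * (m * m / 2)" for k
  proof -
    have e: "(1::real) / 2 ^ (?j k) = (1 / 2 ^ k) * (m * m / 2)"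
      unfolding m_def by (simp add: power_add power_mult power2_eq_square field_simps)
    show "\<bar>val p q d (?j k) - x\<bar> \<le> (1 / 2 ^ k) * (m * m / 2)" using h(5)[of "?j k"] e by simp
    have "(1 / 2 ^ k) * (m * m / 2) \<le> 1 * (m * 1 / 2)"
      using m0 unfolding m_def by (intro mult_mono) (auto simp: field_simps)
    then show "\<bar>val p q d (?j k)\<bar> \<ge> m / 2" using h(5)[of "?j k"] e xm by linarith
  qed
  let ?P = "\<lambda>k. p (?j k)" and ?Q = "\<lambda>k. q (?j k)" and ?D = "\<lambda>k. d (?j k)"
  let ?p = "\<lambda>k. ?D k * (1 - (1 - (?P k - ?Q k)))"
  let ?q = "\<lambda>k. ?D k * (1 - (1 - (?Q k - ?P k)))"
  let ?d = "\<lambda>k. (?P k - ?Q k) + (?Q k - ?P k)"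
  have rfs: "rf ?p" "rf ?q" "rf ?d" using h by (intro rf_add rf_mul rf_sub rf_const rf_shift; simp)+
  have neq: "?P k \<noteq> ?Q k" for k using rj[of k] m0 unfolding val_def by auto
  have d0: "0 < ?d k" for k using neq[of k] by auto
  have v: "val ?p ?q ?d k = inverse (val p q d (?j k))" for k
    using neq[of k] h(4)[of "?j k"] unfolding val_def
    by (cases "?P k < ?Q k") (auto simp: of_nat_diff field_simps)
  have "\<bar>val ?p ?q ?d k - inverse x\<bar> \<le> 1 / 2 ^ k" for k
  proof -
    define r where "r = val p q d (?j k)"
    have r0: "r \<noteq> 0" "\<bar>r\<bar> \<ge> m / 2" using rj[of k] m0 unfolding r_def by auto
    have "inverse r - inverse x = (x - r) / (r * x)" using r0 assms(2) by (simp add: field_simps)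
    then have "\<bar>inverse r - inverse x\<bar> = \<bar>x - r\<bar> / (\<bar>r\<bar> * \<bar>x\<bar>)"
      by (simp add: abs_mult)
    also have "\<dots> \<le> ((1 / 2 ^ k) * (m * m / 2)) / ((m / 2) * m)"
      using rjx[of k] r0 xm m0 unfolding r_def
      by (intro frac_le mult_mono) (auto simp: abs_minus_commute)
    also have "\<dots> = 1 / 2 ^ k" using m0 by (simp add: field_simps)
    finally show ?thesis unfolding v r_def .
  qed
  then show ?thesis unfolding capx_def using rfs d0
    by (intro exI[of _ ?p] exI[of _ ?q] exI[of _ ?d]) auto
qed


lemma sqrt_diff_le: assumes "0 \<le> a" "0 \<le> b" shows "\<bar>sqrt a - sqrt b\<bar> \<le> sqrt \<bar>a - b\<bar>"
proof -
  have *: "sqrt u - sqrt v \<le> sqrt \<bar>u - v\<bar>" if "0 \<le> v" "v \<le> u" for u v :: real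
  proof -
    have "sqrt u = sqrt (v + (u - v))" by simp
    also have "\<dots> \<le> sqrt v + sqrt (u - v)" using that by (intro sqrt_add_le_add_sqrt) auto
    finally show ?thesis using that by simp
  qed
  show ?thesis
  proof (cases "b \<le> a")
    case True then show ?thesis using *[of b a] assms real_sqrt_le_mono[of b a] by auto
  next
    case False then show ?thesis using *[of a b] assms real_sqrt_le_mono[of a b] by (auto simp: abs_minus_commute)
  qed
qed

lemma capx_sqrt_nonneg: assumes "capx y" "0 \<le> y" shows "capx (sqrt y)"
proof -
  obtain p q d where h: "rf p" "rf q" "rf d" "\<And>k. 0 < d k" "\<And>k. \<bar>val p q d k - y\<bar> \<le> 1 / 2 ^ k"
    using assms(1) unfolding capx_def by blast
  let ?P = "\<lambda>k. p (2 * k + 2)" and ?Q = "\<lambda>k. q (2 * k + 2)" and ?D = "\<lambda>k. d (2 * k + 2)"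
  let ?N = "\<lambda>k. (2::nat) ^ (k + 1)"
  let ?W = "\<lambda>k. (?P k - ?Q k) * (?N k * ?N k)"
  let ?n = "\<lambda>k. LEAST n. ?W k < ?D k * ((n + 1) * (n + 1))"
  have rj: "rf (\<lambda>k. 2 * k + 2)" by (intro rf_add rf_mul rf_const rf_id)
  have rN: "rf ?N" by (rule rf_shift[OF rf_pow2])
  have rfs: "rf ?n" "rf (\<lambda>_. 0)" "rf ?N"
    by (rule rf_mu; (intro rf_mul rf_sub rf_comp[OF _ rj] h rN)?; simp add: h(4)) (rule rf_const, rule rN)
  have "\<bar>val ?n (\<lambda>_. 0) ?N k - sqrt y\<bar> \<le> 1 / 2 ^ k" for k
  proof -
    define n where "n = ?n k"
    define t :: real where "t = real (?P k - ?Q k) / real (?D k)"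
    define N :: real where "N = 2 ^ (k + 1)"
    have D0: "0 < ?D k" using h(4) .
    have ex: "?W k < ?D k * ((?W k + 1) * (?W k + 1))"
    proof -
      have "?W k < (?W k + 1) * (?W k + 1)" by simp
      also have "\<dots> \<le> ?D k * ((?W k + 1) * (?W k + 1))" using D0 by (metis Suc_leI mult_le_mono1 mult_1 One_nat_def)
      finally show ?thesis .
    qed
    have n1: "?W k < ?D k * ((n + 1) * (n + 1))" unfolding n_def by (rule LeastI[of _ "?W k"]) (rule ex)
    have n2: "?D k * (n * n) \<le> ?W k"
    proof (cases n)
      case 0 then show ?thesis by simp
    next
      case (Suc m)
      have "\<not> ?W k < ?D k * ((m + 1) * (m + 1))"
        using not_less_Least[of m "\<lambda>n. ?W k < ?D k * ((n + 1) * (n + 1))"] Suc unfolding n_def by auto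
      then show ?thesis using Suc by simp
    qed
    have N0: "0 < N" unfolding N_def by simp
    have t0: "0 \<le> t" unfolding t_def by simp
    define w where "w = real (?P k - ?Q k)"
    have tw: "t = w / real (?D k)" unfolding t_def w_def ..
    have "real (?D k * (n * n)) \<le> real ((?P k - ?Q k) * (?N k * ?N k))"
      using n2 by (simp only: of_nat_le_iff)
    then have c1: "real (?D k) * (real n * real n) \<le> w * (N * N)"
      by (simp add: N_def w_def)
    have eW: "real ((?P k - ?Q k) * (?N k * ?N k)) = w * (N * N)" by (simp add: N_def w_def)
    have eD: "real (?D k * ((n + 1) * (n + 1))) = real (?D k) * ((real n + 1) * (real n + 1))" by (simp add: algebra_simps)
    have c2: "w * (N * N) < real (?D k) * ((real n + 1) * (real n + 1))"
      unfolding eW[symmetric] eD[symmetric] of_nat_less_iff by (rule n1)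
    have Dp: "0 < real (?D k)" using D0 by simp
    have a1: "real n * real n \<le> t * (N * N)"
      using c1 Dp unfolding tw by (simp add: field_simps)
    have a2: "t * (N * N) < (real n + 1) * (real n + 1)"
      using c2 Dp unfolding tw by (simp add: field_simps)
    have s1: "real n \<le> sqrt t * N"
      using real_sqrt_le_mono[OF a1] N0 by (simp add: real_sqrt_mult)
    have s2: "sqrt t * N < real n + 1"
      using real_sqrt_less_mono[OF a2] N0 by (simp add: real_sqrt_mult)
    have b1: "\<bar>real n / N - sqrt t\<bar> \<le> 1 / N"
    proof -
      have "\<bar>real n - sqrt t * N\<bar> \<le> 1" using s1 s2 by linarith
      then have "\<bar>real n - sqrt t * N\<bar> / N \<le> 1 / N" using N0 by (simp add: divide_right_mono)
      moreover have "real n / N - sqrt t = (real n - sqrt t * N) / N" using N0 by (simp add: field_simps)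
      ultimately show ?thesis using N0 by (simp add: abs_divide)
    qed
    have ty: "\<bar>t - y\<bar> \<le> 1 / 2 ^ (2 * k + 2)"
    proof (cases "?Q k \<le> ?P k")
      case True
      then have "t = val p q d (2 * k + 2)" unfolding t_def val_def by (simp add: of_nat_diff)
      then show ?thesis using h(5)[of "2 * k + 2"] by (simp only:)
    next
      case False
      then have "t = 0" "val p q d (2 * k + 2) \<le> 0" unfolding t_def val_def using D0
        by (auto simp: divide_nonpos_pos)
      then show ?thesis using h(5)[of "2 * k + 2"] assms(2) by (simp only: abs_le_iff) linarith
    qed
    have b2: "\<bar>sqrt t - sqrt y\<bar> \<le> 1 / N"
    proof -
      have "\<bar>sqrt t - sqrt y\<bar> \<le> sqrt \<bar>t - y\<bar>" by (rule sqrt_diff_le[OF t0 assms(2)])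
      also have "\<dots> \<le> sqrt (1 / 2 ^ (2 * k + 2))" using ty by (rule real_sqrt_le_mono)
      also have "(2::real) ^ (2 * k + 2) = 2 ^ (k + 1) * 2 ^ (k + 1)"
      proof -
        have "(2::real) ^ (2 * k + 2) = 2 ^ ((k + 1) * 2)" by (simp add: mult.commute)
        also have "\<dots> = (2 ^ (k + 1)) ^ 2" by (rule power_mult)
        finally show ?thesis by (simp add: power2_eq_square)
      qed
      then have "(1::real) / 2 ^ (2 * k + 2) = (1 / N) * (1 / N)" unfolding N_def by simp
      also have "sqrt \<dots> = 1 / N" using N0 by (simp add: real_sqrt_divide)
      finally show ?thesis .
    qed
    have "val ?n (\<lambda>_. 0) ?N k = real n / N" unfolding val_def n_def N_def by simp
    then have "\<bar>val ?n (\<lambda>_. 0) ?N k - sqrt y\<bar> \<le> 1 / N + 1 / N" using b1 b2 by linarith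
    also have "\<dots> = 1 / 2 ^ k" unfolding N_def by simp
    finally show ?thesis .
  qed
  then show ?thesis unfolding capx_def using rfs
    by (intro exI[of _ ?n] exI[of _ "\<lambda>_. 0"] exI[of _ ?N]) auto
qed


lemma capx_sqrt: assumes "capx y" shows "capx (sqrt y)"
proof (cases "0 \<le> y")
  case True then show ?thesis using capx_sqrt_nonneg assms by blast
next
  case False
  then have "sqrt y = - sqrt (- y)" by (simp add: real_sqrt_minus)
  then show ?thesis using capx_sqrt_nonneg[OF capx_uminus[OF assms]] False capx_uminus by auto
qed

lemma capx_inverse: assumes "capx x" shows "capx (inverse x)"
  using capx_inverse_nz[OF assms] capx_nat[of 0] by (cases "x = 0") auto



lemma cr_nat: "computable_real (real n)" by (simp add: computable_real_capx capx_nat)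
lemma cr_0: "computable_real 0" using cr_nat[of 0] by simp
lemma cr_1: "computable_real 1" using cr_nat[of 1] by simp
lemma cr_add: "computable_real x \<Longrightarrow> computable_real y \<Longrightarrow> computable_real (x + y)"
  by (simp add: computable_real_capx capx_add)
lemma cr_uminus: "computable_real x \<Longrightarrow> computable_real (- x)"
  by (simp add: computable_real_capx capx_uminus)
lemma cr_diff: "computable_real x \<Longrightarrow> computable_real y \<Longrightarrow> computable_real (x - y)"
  using cr_add[of x "- y"] cr_uminus[of y] by simp
lemma cr_mult: "computable_real x \<Longrightarrow> computable_real y \<Longrightarrow> computable_real (x * y)"
  by (simp add: computable_real_capx capx_mul)
lemma cr_inverse: "computable_real x \<Longrightarrow> computable_real (inverse x)"
  by (simp add: computable_real_capx capx_inverse)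
lemma cr_divide: "computable_real x \<Longrightarrow> computable_real y \<Longrightarrow> computable_real (x / y)"
  using cr_mult[of x "inverse y"] cr_inverse[of y] by (simp add: divide_inverse)
lemma cr_sqrt: "computable_real x \<Longrightarrow> computable_real (sqrt x)"
  by (simp add: computable_real_capx capx_sqrt)
lemma cr_power2: "computable_real x \<Longrightarrow> computable_real (x\<^sup>2)"
  using cr_mult[of x x] by (simp add: power2_eq_square)
lemma cr_sum: "(\<And>i. i \<in> S \<Longrightarrow> computable_real (f i)) \<Longrightarrow> computable_real (\<Sum>i\<in>S. f i)"
proof (induction S rule: infinite_finite_induct)
  case (infinite A) then show ?case by (simp add: cr_0)
next
  case empty then show ?case by (simp add: cr_0)
next
  case (insert x F) then show ?case by (simp add: cr_add)
qed

lemma cc_intro: "computable_real (Re z) \<Longrightarrow> computable_real (Im z) \<Longrightarrow> computable_complex z"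
  by (simp add: computable_complex_def)
lemma cc_Re: "computable_complex z \<Longrightarrow> computable_real (Re z)" by (simp add: computable_complex_def)
lemma cc_Im: "computable_complex z \<Longrightarrow> computable_real (Im z)" by (simp add: computable_complex_def)

lemma cc_0: "computable_complex 0" by (simp add: computable_complex_def cr_0)
lemma cc_1: "computable_complex 1" by (simp add: computable_complex_def cr_0 cr_1)
lemma cc_of_real: "computable_real x \<Longrightarrow> computable_complex (complex_of_real x)"
  by (simp add: computable_complex_def cr_0)
lemma cc_add: "computable_complex x \<Longrightarrow> computable_complex y \<Longrightarrow> computable_complex (x + y)"
  by (simp add: computable_complex_def cr_add)
lemma cc_uminus: "computable_complex x \<Longrightarrow> computable_complex (- x)"
  by (simp add: computable_complex_def cr_uminus)
lemma cc_diff: "computable_complex x \<Longrightarrow> computable_complex y \<Longrightarrow> computable_complex (x - y)"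
  by (simp add: computable_complex_def cr_diff)
lemma cc_mult: "computable_complex x \<Longrightarrow> computable_complex y \<Longrightarrow> computable_complex (x * y)"
  by (simp add: computable_complex_def cr_diff cr_add cr_mult)
lemma cc_cnj: "computable_complex x \<Longrightarrow> computable_complex (cnj x)"
  by (simp add: computable_complex_def cr_uminus)
lemma cc_inverse: "computable_complex x \<Longrightarrow> computable_complex (inverse x)"
  by (simp add: computable_complex_def cr_uminus cr_divide cr_add cr_power2)
lemma cc_divide: "computable_complex x \<Longrightarrow> computable_complex y \<Longrightarrow> computable_complex (x / y)"
  using cc_mult[of x "inverse y"] cc_inverse[of y] by (simp add: divide_inverse)
lemma cc_sum: "(\<And>i. i \<in> S \<Longrightarrow> computable_complex (f i)) \<Longrightarrow> computable_complex (\<Sum>i\<in>S. f i)"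
proof (induction S rule: infinite_finite_induct)
  case (infinite A) then show ?case by (simp add: cc_0)
next
  case empty then show ?case by (simp add: cc_0)
next
  case (insert x F) then show ?case by (simp add: cc_add)
qed
lemma cr_cmod: "computable_complex z \<Longrightarrow> computable_real (cmod z)"
  unfolding cmod_def by (intro cr_sqrt cr_add cr_power2 cc_Re cc_Im)

typedef ccomp = "{z::complex. computable_complex z}" morphisms crep cabs
  using cc_0 by blast

setup_lifting type_definition_ccomp

instantiation ccomp :: field
begin
lift_definition zero_ccomp :: ccomp is 0 by (simp add: cc_0)
lift_definition one_ccomp :: ccomp is 1 by (simp add: cc_1)
lift_definition plus_ccomp :: "ccomp \<Rightarrow> ccomp \<Rightarrow> ccomp" is "(+)" by (simp add: cc_add)
lift_definition minus_ccomp :: "ccomp \<Rightarrow> ccomp \<Rightarrow> ccomp" is "(-)" by (simp add: cc_diff)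
lift_definition uminus_ccomp :: "ccomp \<Rightarrow> ccomp" is "uminus" by (simp add: cc_uminus)
lift_definition times_ccomp :: "ccomp \<Rightarrow> ccomp \<Rightarrow> ccomp" is "(*)" by (simp add: cc_mult)
lift_definition inverse_ccomp :: "ccomp \<Rightarrow> ccomp" is "inverse" by (simp add: cc_inverse)
lift_definition divide_ccomp :: "ccomp \<Rightarrow> ccomp \<Rightarrow> ccomp" is "(/)" by (simp add: cc_divide)
instance
  by standard (transfer; simp add: algebra_simps divide_inverse)+
end

lemma crep_ops: "crep 0 = 0" "crep 1 = 1" "crep (a + b) = crep a + crep b" "crep (a * b) = crep a * crep b"
  by (transfer; simp)+

lemma crep_sum: "crep (\<Sum>i\<in>S. f i) = (\<Sum>i\<in>S. crep (f i))"
  by (induction S rule: infinite_finite_induct) (simp_all add: crep_ops)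

lemma cc_crep: "computable_complex (crep a)" using crep by auto

definition cmapm :: "ccomp ^'n^'m \<Rightarrow> complex ^'n^'m" where
  "cmapm M = (\<chi> i j. crep (M $ i $ j))"

lemma cmapm_mult: "cmapm (M ** N) = cmapm M ** cmapm N"
  by (simp add: cmapm_def matrix_matrix_mult_def vec_eq_iff crep_sum crep_ops)

lemma ginv_exists:
  fixes C :: "'a::field ^'m^'n"
  shows "\<exists>G. C ** G ** C = C"
proof -
  obtain g where g: "Vector_Spaces.linear (*s) (*s) g" "\<forall>v\<in>range ((*v) C). C *v (g v) = v"
    using vec.linear_exists_right_inverse_on[OF matrix_vector_mul_linear_gen vec.subspace_UNIV, of C]
    by auto
  show ?thesis
  proof (intro exI)
    show "C ** matrix g ** C = C"
      by (simp add: matrix_eq matrix_vector_mul_assoc[symmetric] matrix_works[OF g(1)] g(2))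
  qed
qed

lemma ginv_computable:
  fixes C :: "complex ^'m^'n"
  assumes "computable_mat C"
  shows "\<exists>G. computable_mat G \<and> C ** G ** C = C"
proof -
  define C' :: "ccomp^'m^'n" where "C' = (\<chi> i j. cabs (C $ i $ j))"
  have CC: "cmapm C' = C" using assms unfolding cmapm_def C'_def computable_mat_def
    by (simp add: vec_eq_iff cabs_inverse)
  obtain G' where "C' ** G' ** C' = C'" using ginv_exists by blast
  then have "cmapm C' ** cmapm G' ** cmapm C' = cmapm C'" by (metis cmapm_mult)
  moreover have "computable_mat (cmapm G')" unfolding computable_mat_def cmapm_def by (simp add: cc_crep)
  ultimately show ?thesis using CC by metis
qed



abbreviation ct :: "complex ^ 'n ^ 'm \<Rightarrow> complex ^ 'm ^ 'n" where "ct \<equiv> conj_transpose"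

lemma ct_ct[simp]: "ct (ct A) = A"
  by (simp add: conj_transpose_def vec_eq_iff)

lemma ct_mult: "ct (A ** B) = ct B ** ct A"
  by (simp add: conj_transpose_def matrix_matrix_mult_def vec_eq_iff mult.commute)

lemma ct_zero[simp]: "ct 0 = 0"
  by (simp add: conj_transpose_def vec_eq_iff)

lemma ct_eq_iff: "ct A = ct B \<longleftrightarrow> A = B"
  by (metis ct_ct)

lemma mm_diff_ldistrib: "(A::'a::ring_1^'n^'m) ** (B - C) = A ** B - A ** C"
  by (simp add: matrix_matrix_mult_def vec_eq_iff sum_subtractf algebra_simps)

lemma mm_diff_rdistrib: "((B::'a::ring_1^'n^'m) - C) ** A = B ** A - C ** A"
  by (simp add: matrix_matrix_mult_def vec_eq_iff sum_subtractf algebra_simps)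

lemma ctN_zero:
  fixes N :: "complex ^ 'n ^ 'm"
  assumes "ct N ** N = 0"
  shows "N = 0"
proof -
  have "N $ i $ j = 0" for i j
  proof -
    have "(ct N ** N) $ j $ j = 0" using assms by simp
    then have "(\<Sum>k\<in>UNIV. cnj (N $ k $ j) * N $ k $ j) = 0"
      by (simp add: matrix_matrix_mult_def conj_transpose_def)
    then have "Re (\<Sum>k\<in>UNIV. cnj (N $ k $ j) * N $ k $ j) = 0" by simp
    moreover have e: "(cmod w)\<^sup>2 = Re (cnj w * w)" for w :: complex
      unfolding cmod_power2 by (simp add: power2_eq_square)
    ultimately have "(\<Sum>k\<in>UNIV. (cmod (N $ k $ j))\<^sup>2) = 0"
      by (simp only: e Re_sum)
    then have "\<forall>k\<in>UNIV. (cmod (N $ k $ j))\<^sup>2 = 0"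
      by (subst sum_nonneg_eq_0_iff[symmetric]) auto
    then show ?thesis by simp
  qed
  then show ?thesis by (simp add: vec_eq_iff)
qed

lemma cancel_left:
  fixes A :: "complex ^ 'n ^ 'm"
  assumes "ct A ** A ** M1 = ct A ** A ** M2"
  shows "A ** M1 = A ** M2"
proof -
  let ?N = "A ** (M1 - M2)"
  have z: "ct A ** A ** (M1 - M2) = 0" using assms by (simp add: mm_diff_ldistrib)
  have "ct ?N ** ?N = ct (M1 - M2) ** (ct A ** A ** (M1 - M2))"
    by (simp only: ct_mult matrix_mul_assoc)
  also have "\<dots> = 0" unfolding z by (simp add: matrix_matrix_mult_def vec_eq_iff)
  finally have "?N = 0" by (rule ctN_zero)
  then have "A ** M1 - A ** M2 = 0" by (simp only: mm_diff_ldistrib)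
  then show ?thesis by simp
qed

lemma cancel_right:
  fixes A :: "complex ^ 'n ^ 'm"
  assumes "M1 ** A ** ct A = M2 ** A ** ct A"
  shows "M1 ** A = M2 ** A"
proof -
  have "ct (ct A) ** ct A ** ct M1 = ct (ct A) ** ct A ** ct M2"
    using arg_cong[OF assms, of ct] by (simp add: ct_mult matrix_mul_assoc)
  then have "ct A ** ct M1 = ct A ** ct M2" by (rule cancel_left)
  then show ?thesis by (simp add: ct_mult[symmetric] ct_eq_iff)
qed

definition penrose :: "complex ^ 'n ^ 'm \<Rightarrow> complex ^ 'm ^ 'n \<Rightarrow> bool" where
  "penrose A X \<longleftrightarrow> A ** X ** A = A \<and> X ** A ** X = X \<and> ct (A ** X) = A ** X \<and> ct (X ** A) = X ** A"

lemma penrose_unique: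
  assumes "penrose A X" "penrose A Y"
  shows "X = Y"
proof -
  have X: "A ** X ** A = A" "X ** A ** X = X" "ct (A ** X) = A ** X" "ct (X ** A) = X ** A"
    using assms(1) unfolding penrose_def by auto
  have Y: "A ** Y ** A = A" "Y ** A ** Y = Y" "ct (A ** Y) = A ** Y" "ct (Y ** A) = Y ** A"
    using assms(2) unfolding penrose_def by auto
  have "X = X ** (A ** X)" using X(2) by (simp add: matrix_mul_assoc)
  also have "\<dots> = X ** ct (A ** X)" using X(3) by simp
  also have "\<dots> = X ** ct X ** ct A" by (simp add: ct_mult matrix_mul_assoc)
  also have "\<dots> = X ** ct X ** ct (A ** Y ** A)" using Y(1) by simp
  also have "\<dots> = X ** ct (A ** X) ** ct (A ** Y)" by (simp add: ct_mult matrix_mul_assoc)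
  also have "\<dots> = X ** A ** X ** A ** Y" using X(3) Y(3) by (simp add: matrix_mul_assoc)
  also have "\<dots> = X ** A ** Y" using X(2) by simp
  finally have 1: "X = X ** A ** Y" .
  have "Y = (Y ** A) ** Y" using Y(2) by simp
  also have "\<dots> = ct (Y ** A) ** Y" using Y(4) by simp
  also have "\<dots> = ct A ** ct Y ** Y" by (simp add: ct_mult)
  also have "\<dots> = ct (A ** X ** A) ** ct Y ** Y" using X(1) by simp
  also have "\<dots> = ct (X ** A) ** ct (Y ** A) ** Y" by (simp add: ct_mult matrix_mul_assoc)
  also have "\<dots> = X ** (A ** Y ** A) ** Y" using X(4) Y(4) by (simp add: matrix_mul_assoc)
  also have "\<dots> = X ** A ** Y" using Y(1) Y(2) by (simp add: matrix_mul_assoc)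
  finally have 2: "Y = X ** A ** Y" .
  show ?thesis using 1 2 by simp
qed

lemma pinv_eq: assumes "penrose A X" shows "pinv A = X"
  unfolding pinv_def
proof (rule the_equality)
  show "A ** X ** A = A \<and> X ** A ** X = X \<and> ct (A ** X) = A ** X \<and> ct (X ** A) = X ** A"
    using assms unfolding penrose_def .
  fix Y assume "A ** Y ** A = A \<and> Y ** A ** Y = Y \<and> ct (A ** Y) = A ** Y \<and> ct (Y ** A) = Y ** A"
  then have "penrose A Y" unfolding penrose_def .
  then show "Y = X" using penrose_unique assms by blast
qed

lemma zlobec:
  fixes A :: "complex ^ 'n ^ 'm"
  assumes G: "(ct A ** A ** ct A) ** G ** (ct A ** A ** ct A) = ct A ** A ** ct A"
    and Xd: "X = ct A ** G ** ct A"
  shows "penrose A X"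
proof -
  have "ct A ** A ** (ct A ** G ** ct A ** A ** ct A) = ct A ** A ** ct A"
    using G by (simp only: matrix_mul_assoc)
  then have "A ** (ct A ** G ** ct A ** A ** ct A) = A ** ct A" by (rule cancel_left)
  then have "(A ** ct A ** G ** ct A) ** A ** ct A = mat 1 ** A ** ct A" by (simp add: matrix_mul_assoc)
  then have "(A ** ct A ** G ** ct A) ** A = mat 1 ** A" by (rule cancel_right)
  then have E1: "A ** X ** A = A" unfolding Xd by (simp add: matrix_mul_assoc)
  have cE1: "ct A ** ct (A ** X) = ct A"
    using arg_cong[OF E1, of ct] by (simp only: ct_mult[of "A ** X" A])
  have cE1': "ct (X ** A) ** ct A = ct A"
    using arg_cong[OF E1, of ct] by (simp only: ct_mult[of "A ** X" A] ct_mult[of A X] ct_mult[of X A] matrix_mul_assoc)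
  have "A ** X = (A ** ct A ** G) ** ct A" unfolding Xd by (simp only: matrix_mul_assoc)
  also have "\<dots> = (A ** ct A ** G) ** (ct A ** ct (A ** X))" by (simp only: cE1)
  also have "\<dots> = (A ** X) ** ct (A ** X)" by (simp only: Xd matrix_mul_assoc)
  finally have AX: "A ** X = (A ** X) ** ct (A ** X)" .
  have "ct (A ** X) = ct ((A ** X) ** ct (A ** X))" using AX by (rule arg_cong)
  also have "\<dots> = (A ** X) ** ct (A ** X)" by (simp only: ct_mult ct_ct)
  also have "\<dots> = A ** X" by (rule AX[symmetric])
  finally have H1: "ct (A ** X) = A ** X" .
  have "X ** A = ct A ** (G ** ct A ** A)" unfolding Xd by (simp only: matrix_mul_assoc)
  also have "\<dots> = (ct (X ** A) ** ct A) ** (G ** ct A ** A)" by (simp only: cE1')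
  also have "\<dots> = ct (X ** A) ** (X ** A)" by (simp only: Xd matrix_mul_assoc)
  finally have XA: "X ** A = ct (X ** A) ** (X ** A)" .
  have "ct (X ** A) = ct (ct (X ** A) ** (X ** A))" using XA by (rule arg_cong)
  also have "\<dots> = ct (X ** A) ** (X ** A)" by (simp only: ct_mult ct_ct)
  also have "\<dots> = X ** A" by (rule XA[symmetric])
  finally have H2: "ct (X ** A) = X ** A" .
  have c: "ct A ** (A ** X) = ct A" using cE1 H1 by simp
  have "X ** A ** X = (ct A ** G ** ct A) ** A ** X"
    by (rule arg_cong[where f="\<lambda>Z. Z ** A ** X"]) (rule Xd)
  also have "\<dots> = (ct A ** G) ** (ct A ** (A ** X))" by (simp only: matrix_mul_assoc)
  also have "\<dots> = (ct A ** G) ** ct A" by (simp only: c)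
  also have "\<dots> = X" by (simp only: Xd matrix_mul_assoc)
  finally have XAX: "X ** A ** X = X" .
  show ?thesis unfolding penrose_def using E1 H1 H2 XAX by blast
qed



lemma cm_mult: "computable_mat A \<Longrightarrow> computable_mat B \<Longrightarrow> computable_mat (A ** B)"
  unfolding computable_mat_def matrix_matrix_mult_def by (auto intro!: cc_sum cc_mult)

lemma cm_ct: "computable_mat A \<Longrightarrow> computable_mat (ct A)"
  unfolding computable_mat_def conj_transpose_def by (auto intro!: cc_cnj)

lemma cv_mv: "computable_mat A \<Longrightarrow> computable_vec x \<Longrightarrow> computable_vec (A *v x)"
  unfolding computable_mat_def computable_vec_def matrix_vector_mult_def by (auto intro!: cc_sum cc_mult)

lemma cv_diff: "computable_vec x \<Longrightarrow> computable_vec y \<Longrightarrow> computable_vec (x - y)"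
  unfolding computable_vec_def by (auto intro!: cc_diff)

lemma cr_frob: "computable_mat A \<Longrightarrow> computable_real (frob_norm A)"
  unfolding computable_mat_def frob_norm_def by (auto intro!: cr_sqrt cr_sum cr_power2 cr_cmod)

lemma cr_vnorm: "computable_vec v \<Longrightarrow> computable_real (vec_norm2 v)"
  unfolding computable_vec_def vec_norm2_def by (auto intro!: cr_sqrt cr_sum cr_power2 cr_cmod)

lemma penrose_ctAAX:
  assumes "penrose A X" shows "ct A ** A ** X = ct A"
proof -
  have X: "A ** X ** A = A" "ct (A ** X) = A ** X" using assms unfolding penrose_def by auto
  have "ct A ** A ** X = ct A ** ct (A ** X)" using X(2) by (simp add: matrix_mul_assoc)
  also have "\<dots> = ct (A ** X ** A)" by (simp only: ct_mult)
  also have "\<dots> = ct A" using X(1) by simp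
  finally show ?thesis .
qed

lemma inner_adj:
  fixes A :: "complex ^ 'n ^ 'm"
  shows "(\<Sum>i\<in>UNIV. cnj ((A *v z) $ i) * w $ i) = (\<Sum>j\<in>UNIV. cnj (z $ j) * (ct A *v w) $ j)"
proof -
  have "(\<Sum>i\<in>UNIV. cnj ((A *v z) $ i) * w $ i) = (\<Sum>i\<in>UNIV. \<Sum>j\<in>UNIV. cnj (A $ i $ j) * cnj (z $ j) * w $ i)"
    by (simp add: matrix_vector_mult_def cnj_sum sum_distrib_right)
  also have "\<dots> = (\<Sum>j\<in>UNIV. \<Sum>i\<in>UNIV. cnj (A $ i $ j) * cnj (z $ j) * w $ i)"
    by (rule sum.swap)
  also have "\<dots> = (\<Sum>j\<in>UNIV. cnj (z $ j) * (ct A *v w) $ j)"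
    by (simp add: matrix_vector_mult_def conj_transpose_def sum_distrib_left mult_ac)
  finally show ?thesis .
qed

lemma cmod_add_sq: "(cmod (a + b))\<^sup>2 = (cmod a)\<^sup>2 + (cmod b)\<^sup>2 + 2 * Re (cnj a * b)"
  unfolding cmod_power2 by (simp add: power2_eq_square algebra_simps)

lemma least_squares:
  fixes A :: "complex ^ 'n ^ 'm"
  assumes "penrose A X"
  shows "vec_norm2 (A *v (X *v b) - b) \<le> vec_norm2 (A *v x - b)"
proof -
  define z where "z = x - X *v b"
  define u where "u = A *v z"
  define w where "w = A *v (X *v b) - b"
  have uw: "A *v x - b = u + w" unfolding u_def w_def z_def by (simp add: matrix_vector_mult_diff_distrib)
  have ctw: "ct A *v w = 0"
    unfolding w_def using penrose_ctAAX[OF assms]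
    by (simp add: matrix_vector_mult_diff_distrib matrix_vector_mul_assoc matrix_mul_assoc)
  have inner0: "(\<Sum>i\<in>UNIV. cnj (u $ i) * w $ i) = 0"
    unfolding u_def inner_adj ctw by simp
  have "(\<Sum>i\<in>UNIV. (cmod ((A *v x - b) $ i))\<^sup>2)
      = (\<Sum>i\<in>UNIV. (cmod (u $ i))\<^sup>2) + (\<Sum>i\<in>UNIV. (cmod (w $ i))\<^sup>2) + 2 * Re (\<Sum>i\<in>UNIV. cnj (u $ i) * w $ i)"
    unfolding uw by (simp add: cmod_add_sq sum.distrib sum_distrib_left Re_sum)
  also have "\<dots> \<ge> (\<Sum>i\<in>UNIV. (cmod (w $ i))\<^sup>2)"
    unfolding inner0 by (simp add: sum_nonneg)
  finally have "(\<Sum>i\<in>UNIV. (cmod (w $ i))\<^sup>2) \<le> (\<Sum>i\<in>UNIV. (cmod ((A *v x - b) $ i))\<^sup>2)" .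
  then show ?thesis unfolding vec_norm2_def w_def by (rule real_sqrt_le_mono)
qed

theorem theorem3p7:
  fixes A :: "complex ^ 'n ^ 'm" and b :: "complex ^ 'm"
  assumes "computable_mat A" and "computable_vec b"
  shows "computable_mat (pinv A)
       \<and> computable_real (frob_norm (pinv A))
       \<and> computable_real (Inf (range (\<lambda>x::complex ^ 'n. vec_norm2 (A *v x - b))))
       \<and> computable_vec (pinv A *v b)
       \<and> computable_real (vec_norm2 (pinv A *v b))
       \<and> computable_real (frob_norm A * frob_norm (pinv A))"
proof -
  let ?C = "ct A ** A ** ct A"
  have cC: "computable_mat ?C" using assms(1) by (intro cm_mult cm_ct)
  obtain G where G: "computable_mat G" "?C ** G ** ?C = ?C"
    using ginv_computable[OF cC] by blast
  have pen: "penrose A (ct A ** G ** ct A)" by (rule zlobec[OF G(2) refl])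
  have P: "pinv A = ct A ** G ** ct A" by (rule pinv_eq[OF pen])
  have cP: "computable_mat (pinv A)" unfolding P using assms(1) G(1) by (intro cm_mult cm_ct)
  have cPb: "computable_vec (pinv A *v b)" using cP assms(2) by (rule cv_mv)
  have inf: "Inf (range (\<lambda>x::complex ^ 'n. vec_norm2 (A *v x - b))) = vec_norm2 (A *v (pinv A *v b) - b)"
  proof (rule cInf_eq_minimum)
    show "vec_norm2 (A *v (pinv A *v b) - b) \<in> range (\<lambda>x::complex ^ 'n. vec_norm2 (A *v x - b))" by blast
    fix y assume "y \<in> range (\<lambda>x::complex ^ 'n. vec_norm2 (A *v x - b))"
    then obtain x where "y = vec_norm2 (A *v x - b)" by blast
    then show "vec_norm2 (A *v (pinv A *v b) - b) \<le> y"
      using least_squares[OF pen, of b x] P by simp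
  qed
  show ?thesis
    using cP cPb assms
    by (auto simp: inf intro!: cr_frob cr_vnorm cr_mult cv_diff cv_mv)
qed


end
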